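(* Let $(M,d)$ be a complete separable geodesic space and $m\in\mathcal P_2(M)$ such that (A1) and (A2) hold. Let $\beta>0$ and suppose each loss $\ell_t$ ($t\ge1$) is measurable and geodesically $\beta$-expconcave, and that the \textsc{ewb} forecaster with $\beta_t=\beta$ is well defined (normalizing integrals finite and positive, each $m_t\in\mathcal P_2(M)$). Then for all $n\ge1$, with $L_n=\sum_{t=1}^n\ell_t$, \[\sum_{t=1}^n\ell_t(x_t)\le\inf_\mu\Big\{\int_ML_n\,\mathrm d\mu+\frac{\mathcal E(\mu|m)}{\beta}\Big\},\] where the infimum runs over probability measures $\mu$ on $M$ for which $\int L_n\,\mathrm d\mu$ is well defined.
   Context: Geodesic: path $\gamma:[0,1]\to M$ with $d(\gamma(s),\gamma(t))=|t-s|d(\gamma(0),\gamma(1))$. $f$ is geodesically convex if $t\mapsto f(\gamma(t))$ is convex for every geodesic; geodesically concave if $-f$ is; geodesically $\beta$-expconcave if $e^{-\beta f}$ is geodesically concave. $\mathcal P_2(M)$: Borel probability measures with $\int d^2(x,y)\mu(\mathrm dy)<\infty$ for all $x$; barycenter: minimizer of $x\mapsto\int d^2(x,y)\mu(\mathrm dy)$. (A1): every $\mu\in\mathcal P_2(M)$ has a barycenter. (A2): for every $\mu\in\mathcal P_2(M)$, barycenter $x^*$ of $\mu$ and geodesically convex $f:M\to\mathbb R$ either positive or in $L^1(\mu)$, $f(x^* )\le\int f\mathrm d\mu$. Relative entropy: $\mathcal E(\mu|m)=\int\ln(\mathrm d\mu/\mathrm dm)\,\mathrm d\mu$ if $\mu\ll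 m$, $+\infty$ otherwise. \textsc{ewb} forecaster with parameter $\beta$: $m_1=m$, $\mathrm dm_{t+1}=e^{-\beta\ell_t}\mathrm dm_t/\int e^{-\beta\ell_t}\mathrm dm_t$, $x_t$ any barycenter of $m_t$. *)

theory Defs
  imports "HOL-Probability.Probability"
begin

text \<open>Geodesics in a metric space (the whole type is the space M).\<close>
definition geodesic :: "(real \<Rightarrow> 'a::metric_space) \<Rightarrow> bool" where
  "geodesic \<gamma> \<longleftrightarrow> (\<forall>s\<in>{0..1}. \<forall>t\<in>{0..1}.
      dist (\<gamma> s) (\<gamma> t) = \<bar>t - s\<bar> * dist (\<gamma> 0) (\<gamma> 1))"

definition geodesic_space :: "'a::metric_space itself \<Rightarrow> bool" where
  "geodesic_space _ \<longleftrightarrow> (\<forall>x y::'a. \<exists>\<gamma>. geodesic \<gamma> \<and> \<gamma> 0 = x \<and> \<gamma> 1 = y)"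

definition geod_convex :: "('a::metric_space \<Rightarrow> real) \<Rightarrow> bool" where
  "geod_convex f \<longleftrightarrow> (\<forall>\<gamma>. geodesic \<gamma> \<longrightarrow> convex_on {0..1} (\<lambda>t. f (\<gamma> t)))"

definition geod_concave :: "('a::metric_space \<Rightarrow> real) \<Rightarrow> bool" where
  "geod_concave f \<longleftrightarrow> geod_convex (\<lambda>x. - f x)"

definition geod_expconcave :: "real \<Rightarrow> ('a::metric_space \<Rightarrow> real) \<Rightarrow> bool" where
  "geod_expconcave \<beta> f \<longleftrightarrow> geod_concave (\<lambda>x. exp (- \<beta> * f x))"

definition P2 :: "'a::metric_space measure \<Rightarrow> bool" where
  "P2 \<mu> \<longleftrightarrow> prob_space \<mu> \<and> sets \<mu> = sets borel \<and>
     (\<forall>x. integrable \<mu> (\<lambda>y. (dist x y)\<^sup>2))"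

definition barycenter :: "'a::metric_space measure \<Rightarrow> 'a \<Rightarrow> bool" where
  "barycenter \<mu> x \<longleftrightarrow>
     (\<forall>z. (\<integral>y. (dist x y)\<^sup>2 \<partial>\<mu>) \<le> (\<integral>y. (dist z y)\<^sup>2 \<partial>\<mu>))"

definition A1 :: "'a::metric_space itself \<Rightarrow> bool" where
  "A1 _ \<longleftrightarrow> (\<forall>\<mu>::'a measure. P2 \<mu> \<longrightarrow> (\<exists>x. barycenter \<mu> x))"

definition A2 :: "'a::metric_space itself \<Rightarrow> bool" where
  "A2 _ \<longleftrightarrow> (\<forall>(\<mu>::'a measure) x f. P2 \<mu> \<longrightarrow> barycenter \<mu> x \<longrightarrow> geod_convex f \<longrightarrow>
      (((\<forall>y. f y > 0) \<and> f \<in> borel_measurable borel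
           \<longrightarrow> ennreal (f x) \<le> (\<integral>\<^sup>+y. ennreal (f y) \<partial>\<mu>)) \<and>
       (integrable \<mu> f \<longrightarrow> f x \<le> (\<integral>y. f y \<partial>\<mu>))))"

definition ext_integral :: "'a measure \<Rightarrow> ('a \<Rightarrow> real) \<Rightarrow> ereal" where
  "ext_integral \<mu> f = enn2ereal (\<integral>\<^sup>+x. ennreal (f x) \<partial>\<mu>) - enn2ereal (\<integral>\<^sup>+x. ennreal (- f x) \<partial>\<mu>)"

definition integral_well_defined :: "'a measure \<Rightarrow> ('a \<Rightarrow> real) \<Rightarrow> bool" where
  "integral_well_defined \<mu> f \<longleftrightarrow> f \<in> borel_measurable \<mu> \<and>
     ((\<integral>\<^sup>+x. ennreal (f x) \<partial>\<mu>) < \<infinity> \<or> (\<integral>\<^sup>+x. ennreal (- f x) \<partial>\<mu>) < \<infinity>)"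

definition rel_entropy :: "'a measure \<Rightarrow> 'a measure \<Rightarrow> ereal" where
  "rel_entropy \<mu> m = (if absolutely_continuous m \<mu>
      then ext_integral \<mu> (\<lambda>x. ln (enn2real (RN_deriv m \<mu> x))) else \<infinity>)"

end

theory Submission imports Defs begin

lemma meas_sets: "f \<in> borel_measurable borel \<Longrightarrow> sets M = sets borel \<Longrightarrow> f \<in> borel_measurable M"
  using measurable_cong_sets[of M borel borel borel] by simp

lemma ext_int_integrable:
  assumes "integrable M f" shows "ext_integral M f = ereal (integral\<^sup>L M f)"
proof -
  obtain r q where "0 \<le> r" "0 \<le> q" "(\<integral>\<^sup>+x. ennreal (f x)\<partial>M) = ennreal r"
    "(\<integral>\<^sup>+x. ennreal (-f x)\<partial>M) = ennreal q" "integral\<^sup>L M f = r - q"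
    using integrableE[OF assms] by metis
  then show ?thesis unfolding ext_integral_def by simp
qed

lemma integrable_from_below:
  fixes f h :: "'a \<Rightarrow> real"
  assumes fm: "f \<in> borel_measurable M" and fp: "(\<integral>\<^sup>+x. ennreal (f x) \<partial>M) < \<infinity>"
    and hi: "integrable M h" and le: "AE x in M. h x \<le> f x"
  shows "integrable M f"
proof -
  have "(\<integral>\<^sup>+x. ennreal (- f x) \<partial>M) \<le> (\<integral>\<^sup>+x. ennreal (- h x) \<partial>M)"
    using le by (intro nn_integral_mono_AE) (auto elim!: eventually_mono intro: ennreal_leI)
  moreover have "(\<integral>\<^sup>+x. ennreal (- h x) \<partial>M) < \<infinity>" using hi by (auto simp: less_top[symmetric])
  ultimately have "(\<integral>\<^sup>+x. ennreal (- f x) \<partial>M) < \<infinity>" by (rule le_less_trans)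
  then show ?thesis unfolding real_integrable_def using fm fp by auto
qed

lemma integrable_pos_part:
  fixes f :: "'a \<Rightarrow> real"
  assumes fm: "f \<in> borel_measurable M" and fp: "(\<integral>\<^sup>+x. ennreal (f x) \<partial>M) < \<infinity>"
  shows "integrable M (\<lambda>x. max (f x) 0)"
proof (rule integrable_from_below[where h="\<lambda>_. 0"])
  have "(\<lambda>x. ennreal (max (f x) 0)) = (\<lambda>x. ennreal (f x))"
    by (auto simp: max_def fun_eq_iff ennreal_neg)
  then show "(\<integral>\<^sup>+x. ennreal (max (f x) 0) \<partial>M) < \<infinity>" using fp by simp
qed (use fm in auto)


theorem mainTheorem11:
  fixes m :: "'a::polish_space measure"
    and \<beta> :: real
    and loss :: "nat \<Rightarrow> 'a \<Rightarrow> real"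
    and mt :: "nat \<Rightarrow> 'a measure"
    and x :: "nat \<Rightarrow> 'a"
  assumes geod: "geodesic_space TYPE('a)"
    and m_P2: "P2 m"
    and A1: "A1 TYPE('a)"
    and A2: "A2 TYPE('a)"
    and beta_pos: "\<beta> > 0"
    and loss_meas: "\<And>t. t \<ge> 1 \<Longrightarrow> loss t \<in> borel_measurable borel"
    and loss_expconc: "\<And>t. t \<ge> 1 \<Longrightarrow> geod_expconcave \<beta> (loss t)"
    and ewb_init: "mt 1 = m"
    and ewb_norm_int: "\<And>t. t \<ge> 1 \<Longrightarrow> integrable (mt t) (\<lambda>y. exp (- \<beta> * loss t y))"
    and ewb_norm_pos: "\<And>t. t \<ge> 1 \<Longrightarrow> (\<integral>y. exp (- \<beta> * loss t y) \<partial>mt t) > 0"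
    and ewb_step: "\<And>t. t \<ge> 1 \<Longrightarrow> mt (Suc t) = density (mt t)
                     (\<lambda>y. ennreal (exp (- \<beta> * loss t y) / (\<integral>z. exp (- \<beta> * loss t z) \<partial>mt t)))"
    and ewb_P2: "\<And>t. t \<ge> 1 \<Longrightarrow> P2 (mt t)"
    and ewb_bary: "\<And>t. t \<ge> 1 \<Longrightarrow> barycenter (mt t) (x t)"
    and n_pos: "n \<ge> 1"
  shows "ereal (\<Sum>t = 1..n. loss t (x t)) \<le>
     (INF \<mu> \<in> {\<mu>. prob_space \<mu> \<and> sets \<mu> = sets borel \<and>
                   integral_well_defined \<mu> (\<lambda>y. \<Sum>t = 1..n. loss t y)}.
        ext_integral \<mu> (\<lambda>y. \<Sum>t = 1..n. loss t y) + rel_entropy \<mu> m / ereal \<beta>)"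
proof -
  define W where "W t = (\<integral>y. exp (- \<beta> * loss t y) \<partial>mt t)" for t
  define L where "L k y = (\<Sum>t = 1..k. loss t y)" for k y
  define Z where "Z k = (\<Prod>t = 1..k. W t)" for k
  have Wpos: "W t > 0" if "t \<ge> 1" for t using ewb_norm_pos[OF that] by (simp add: W_def)
  have Zpos: "Z k > 0" for k unfolding Z_def by (rule prod_pos) (use Wpos in auto)
  have sets_m: "sets m = sets borel" and prob_m: "prob_space m" using m_P2 by (auto simp: P2_def)
  have Lmeas: "L k \<in> borel_measurable borel" for k
    unfolding L_def by (intro borel_measurable_sum) (use loss_meas in auto)
  have Lmeas_m: "L k \<in> borel_measurable m" for k using meas_sets[OF Lmeas sets_m] .
  have dens: "mt (Suc k) = density m (\<lambda>y. ennreal (exp (- \<beta> * L k y) / Z k))" for k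
  proof (induction k)
    case 0
    then show ?case using ewb_init by (simp add: L_def Z_def density_1)
  next
    case (Suc k)
    have st: "sets (mt (Suc k)) = sets borel" using ewb_P2[of "Suc k"] by (simp add: P2_def)
    have lm: "loss (Suc k) \<in> borel_measurable m" using meas_sets[OF loss_meas sets_m] by simp
    have "mt (Suc (Suc k)) = density (mt (Suc k)) (\<lambda>y. ennreal (exp (- \<beta> * loss (Suc k) y) / W (Suc k)))"
      using ewb_step[of "Suc k"] by (simp add: W_def)
    also have "\<dots> = density m (\<lambda>y. ennreal (exp (- \<beta> * L k y) / Z k) * ennreal (exp (- \<beta> * loss (Suc k) y) / W (Suc k)))"
      unfolding Suc by (rule density_density_eq) (use Lmeas_m lm in auto)
    also have "\<dots> = density m (\<lambda>y. ennreal (exp (- \<beta> * L (Suc k) y) / Z (Suc k)))"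
    proof (rule arg_cong[where f="density m"], rule ext)
      fix y
      have "exp (- \<beta> * L (Suc k) y) / Z (Suc k) = (exp (- \<beta> * L k y) / Z k) * (exp (- \<beta> * loss (Suc k) y) / W (Suc k))"
      proof -
        have e1: "L (Suc k) y = L k y + loss (Suc k) y" "Z (Suc k) = Z k * W (Suc k)"
          by (simp_all add: L_def Z_def)
        have e2: "exp (- \<beta> * (L k y + loss (Suc k) y)) = exp (- \<beta> * L k y) * exp (- \<beta> * loss (Suc k) y)"
          by (subst exp_add[symmetric]) (simp add: ring_distribs)
        show ?thesis unfolding e1 e2 by simp
      qed
      then show "ennreal (exp (- \<beta> * L k y) / Z k) * ennreal (exp (- \<beta> * loss (Suc k) y) / W (Suc k)) = ennreal (exp (- \<beta> * L (Suc k) y) / Z (Suc k))"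
        using Zpos[of k] Wpos[of "Suc k"] by (subst ennreal_mult''[symmetric]) simp_all
    qed
    finally show ?case .
  qed
  define q where "q y = exp (- \<beta> * L n y) / Z n" for y
  have qpos: "q y > 0" for y using Zpos[of n] by (simp add: q_def)
  have int_q: "(\<integral>\<^sup>+y. ennreal (q y) \<partial>m) = 1"
  proof -
    have ps: "prob_space (mt (Suc n))" using ewb_P2[of "Suc n"] by (simp add: P2_def)
    have sp: "space (mt (Suc n)) = space m" by (simp add: dens)
    have "1 = emeasure (mt (Suc n)) (space m)" using prob_space.emeasure_space_1[OF ps] sp by simp
    also have "\<dots> = (\<integral>\<^sup>+y. ennreal (q y) * indicator (space m) y \<partial>m)"
      unfolding dens q_def by (rule emeasure_density) (use Lmeas_m in auto)
    also have "\<dots> = (\<integral>\<^sup>+y. ennreal (q y) \<partial>m)"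
      by (rule nn_integral_cong) simp
    finally show ?thesis by simp
  qed
  have online: "(\<Sum>t = 1..n. loss t (x t)) \<le> - ln (Z n) / \<beta>"
  proof -
    have each: "loss t (x t) \<le> - ln (W t) / \<beta>" if t: "t \<ge> 1" for t
    proof -
      have gc: "geod_convex (\<lambda>y. - exp (- \<beta> * loss t y))"
        using loss_expconc[OF t] by (simp add: geod_expconcave_def geod_concave_def)
      have "- exp (- \<beta> * loss t (x t)) \<le> (\<integral>y. - exp (- \<beta> * loss t y) \<partial>mt t)"
        using A2 ewb_P2[OF t] ewb_bary[OF t] gc integrable_minus[OF ewb_norm_int[OF t]]
        unfolding A2_def by blast
      then have "W t \<le> exp (- \<beta> * loss t (x t))" by (simp add: W_def)
      then have "ln (W t) \<le> - \<beta> * loss t (x t)" using Wpos[OF t]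
        by (metis ln_exp ln_le_cancel_iff exp_gt_zero)
      then show ?thesis using beta_pos by (simp add: field_simps)
    qed
    have "(\<Sum>t = 1..n. loss t (x t)) \<le> (\<Sum>t = 1..n. - ln (W t) / \<beta>)"
      by (rule sum_mono) (use each in auto)
    also have "\<dots> = - (\<Sum>t = 1..n. ln (W t)) / \<beta>"
      by (simp add: sum_divide_distrib sum_negf)
    also have "(\<Sum>t = 1..n. ln (W t)) = ln (Z n)"
      unfolding Z_def by (rule ln_prod[symmetric]) (use Wpos in force)+
    finally show ?thesis .
  qed
  have Leq: "(\<lambda>y. \<Sum>t = 1..n. loss t y) = L n" by (simp add: L_def fun_eq_iff)
  show ?thesis
    unfolding Leq
  proof (rule INF_greatest)
    fix \<mu> assume "\<mu> \<in> {\<mu>. prob_space \<mu> \<and> sets \<mu> = sets borel \<and> integral_well_defined \<mu> (L n)}"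
    then have prob_mu: "prob_space \<mu>" and sets_mu: "sets \<mu> = sets borel" by auto
    show "ereal (\<Sum>t = 1..n. loss t (x t)) \<le> ext_integral \<mu> (L n) + rel_entropy \<mu> m / ereal \<beta>"
    proof (cases "absolutely_continuous m \<mu>")
      case False
      then have "rel_entropy \<mu> m = \<infinity>" by (simp add: rel_entropy_def)
      then show ?thesis using beta_pos by simp
    next
      case ac: True
      define g where "g = RN_deriv m \<mu>"
      define gr where "gr y = enn2real (g y)" for y
      define \<phi> where "\<phi> y = ln (gr y)" for y
      have ent: "rel_entropy \<mu> m = ext_integral \<mu> \<phi>"
        using ac by (simp add: rel_entropy_def \<phi>_def[abs_def] gr_def g_def)
      have gm: "g \<in> borel_measurable m" by (simp add: g_def)
      have mu_eq: "density m g = \<mu>" unfolding g_def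
        by (rule sigma_finite_measure.density_RN_deriv[OF prob_space_imp_sigma_finite[OF prob_m] ac])
          (simp add: sets_mu sets_m)
      have space_mu: "space \<mu> = space m" using mu_eq[symmetric] by simp
      have Lmu: "L n \<in> borel_measurable \<mu>" using meas_sets[OF Lmeas sets_mu] .
      have phim0: "\<phi> \<in> borel_measurable m" unfolding \<phi>_def gr_def using gm by measurable
      have phim: "\<phi> \<in> borel_measurable \<mu>"
        using phim0 measurable_cong_sets[of \<mu> m borel borel] sets_mu sets_m by simp
      have qm: "q \<in> borel_measurable m" unfolding q_def using Lmeas_m by measurable
      have grm: "gr \<in> borel_measurable m" unfolding gr_def using gm by measurable
      have int_g: "(\<integral>\<^sup>+y. g y \<partial>m) = 1"
      proof -
        have "1 = emeasure \<mu> (space m)" using prob_space.emeasure_space_1[OF prob_mu] space_mu by simp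
        also have "\<dots> = (\<integral>\<^sup>+y. g y * indicator (space m) y \<partial>m)"
          unfolding mu_eq[symmetric] by (rule emeasure_density) (use gm in auto)
        also have "\<dots> = (\<integral>\<^sup>+y. g y \<partial>m)" by (rule nn_integral_cong) simp
        finally show ?thesis by simp
      qed
      have "AE y in m. g y \<noteq> \<infinity>" by (rule nn_integral_PInf_AE[OF gm]) (simp add: int_g)
      then have "AE y in density m g. 0 < g y \<and> g y < \<infinity>"
        using AE_density[OF gm] by (auto elim!: eventually_mono simp: less_top)
      then have AEg: "AE y in \<mu>. 0 < g y \<and> g y < \<infinity>" unfolding mu_eq .
      define rr where "rr y = q y / gr y" for y
      have rr_nn: "rr y \<ge> 0" for y unfolding rr_def gr_def using qpos[of y] by simp
      have rrm: "rr \<in> borel_measurable \<mu>"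
      proof -
        have "rr \<in> borel_measurable m" unfolding rr_def using qm grm by measurable
        then show ?thesis using measurable_cong_sets[of \<mu> m borel borel] sets_mu sets_m by simp
      qed
      have ptw: "g y * ennreal (rr y) \<le> ennreal (q y)" for y
      proof (cases "g y" rule: ennreal_cases)
        case (real a)
        then show ?thesis
        proof (cases "a = 0")
          case False
          have "g y * ennreal (rr y) = ennreal (a * (q y / a))"
          proof -
            have e: "rr y = q y / a" using real by (simp add: rr_def gr_def)
            have "ennreal (a * (q y / a)) = ennreal a * ennreal (q y / a)"
              by (rule ennreal_mult'') (use rr_nn[of y] e in simp)
            then show ?thesis by (simp only: real e)
          qed
          also have "\<dots> = ennreal (q y)" using False by simp
          finally show ?thesis by simp
        qed simp
      next
        case top
        then show ?thesis by (simp add: rr_def gr_def)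
      qed
      have ratio: "(\<integral>\<^sup>+y. ennreal (rr y) \<partial>\<mu>) \<le> 1"
      proof -
        have rrm0: "(\<lambda>y. ennreal (rr y)) \<in> borel_measurable m" unfolding rr_def using qm grm by measurable
        have "(\<integral>\<^sup>+y. ennreal (rr y) \<partial>\<mu>) = (\<integral>\<^sup>+y. g y * ennreal (rr y) \<partial>m)"
          unfolding mu_eq[symmetric] by (rule nn_integral_density[OF gm rrm0])
        also have "\<dots> \<le> (\<integral>\<^sup>+y. ennreal (q y) \<partial>m)" by (rule nn_integral_mono) (rule ptw)
        finally show ?thesis using int_q by simp
      qed
      have rr_int: "integrable \<mu> rr"
      proof -
        have "(\<integral>\<^sup>+y. ennreal (rr y) \<partial>\<mu>) < \<infinity>" using ratio by (rule le_less_trans) simp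
        then have "(\<integral>\<^sup>+y. ennreal (rr y) \<partial>\<mu>) \<noteq> \<infinity>" by simp
        moreover have "(\<integral>\<^sup>+y. ennreal (- rr y) \<partial>\<mu>) = 0"
          using rr_nn by (simp add: ennreal_neg)
        ultimately show ?thesis unfolding real_integrable_def using rrm by simp
      qed
      have rr_le: "integral\<^sup>L \<mu> rr \<le> 1"
      proof -
        have "(\<integral>\<^sup>+y. ennreal (rr y) \<partial>\<mu>) = ennreal (integral\<^sup>L \<mu> rr)"
          by (rule nn_integral_eq_integral[OF rr_int]) (simp add: rr_nn)
        then show ?thesis using ratio by simp
      qed
      have fin: "finite_measure \<mu>" using prob_mu by (simp add: prob_space_def)
      have pw: "AE y in \<mu>. 1 - rr y \<le> \<phi> y + \<beta> * L n y + ln (Z n)"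
        using AEg
      proof (rule eventually_mono)
        fix y assume "0 < g y \<and> g y < \<infinity>"
        then have grp: "gr y > 0" by (simp add: gr_def enn2real_positive_iff)
        have "ln (rr y) \<le> rr y - 1" by (rule ln_le_minus_one) (simp add: rr_def grp qpos)
        moreover have "ln (rr y) = ln (q y) - ln (gr y)" unfolding rr_def using grp qpos[of y] by (simp add: ln_div)
        moreover have "ln (q y) = - \<beta> * L n y - ln (Z n)" unfolding q_def using Zpos[of n] by (simp add: ln_div)
        ultimately show "1 - rr y \<le> \<phi> y + \<beta> * L n y + ln (Z n)" by (simp add: \<phi>_def)
      qed
      show ?thesis
      proof (cases "ext_integral \<mu> (L n) = \<infinity> \<or> ext_integral \<mu> \<phi> = \<infinity>")
        case True
        then show ?thesis
        proof
          assume "ext_integral \<mu> (L n) = \<infinity>"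
          then show ?thesis by simp
        next
          assume "ext_integral \<mu> \<phi> = \<infinity>"
          then have "rel_entropy \<mu> m / ereal \<beta> = \<infinity>" using ent beta_pos by simp
          then show ?thesis by simp
        qed
      next
        case False
        have fin_pos: "(\<integral>\<^sup>+y. ennreal (f y) \<partial>\<mu>) < \<infinity>" if "ext_integral \<mu> f \<noteq> \<infinity>" for f :: "'a \<Rightarrow> real"
        proof (rule ccontr)
          assume "\<not> (\<integral>\<^sup>+y. ennreal (f y) \<partial>\<mu>) < \<infinity>"
          then have "(\<integral>\<^sup>+y. ennreal (f y) \<partial>\<mu>) = \<infinity>" by (simp add: less_top[symmetric])
          then have "ext_integral \<mu> f = \<infinity>" by (simp add: ext_integral_def minus_ereal_def)
          then show False using that by simp
        qed
        have posL: "integrable \<mu> (\<lambda>y. max (L n y) 0)"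
          using integrable_pos_part[OF Lmu fin_pos] False by simp
        have posP: "integrable \<mu> (\<lambda>y. max (\<phi> y) 0)"
          using integrable_pos_part[OF phim fin_pos] False by simp
        have L_int: "integrable \<mu> (L n)"
        proof (rule integrable_from_below[OF Lmu fin_pos])
          show "ext_integral \<mu> (L n) \<noteq> \<infinity>" using False by simp
          show "integrable \<mu> (\<lambda>y. ((1 - rr y) - ln (Z n) - max (\<phi> y) 0) / \<beta>)"
          proof -
            note C = finite_measure.integrable_const[OF fin]
            have c1: "integrable \<mu> (\<lambda>y. 1 - rr y)" by (rule Bochner_Integration.integrable_diff[OF C rr_int])
            have c2: "integrable \<mu> (\<lambda>y. (1 - rr y) - ln (Z n))" by (rule Bochner_Integration.integrable_diff[OF c1 C])
            have c3: "integrable \<mu> (\<lambda>y. (1 - rr y) - ln (Z n) - max (\<phi> y) 0)" by (rule Bochner_Integration.integrable_diff[OF c2 posP])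
            show ?thesis by (rule integrable_divide_zero) (rule c3)
          qed
          show "AE y in \<mu>. ((1 - rr y) - ln (Z n) - max (\<phi> y) 0) / \<beta> \<le> L n y"
            using pw
          proof (rule eventually_mono)
            fix y assume "1 - rr y \<le> \<phi> y + \<beta> * L n y + ln (Z n)"
            then have "(1 - rr y) - ln (Z n) - max (\<phi> y) 0 \<le> \<beta> * L n y" by linarith
            then show "((1 - rr y) - ln (Z n) - max (\<phi> y) 0) / \<beta> \<le> L n y"
              using beta_pos by (simp add: pos_divide_le_eq mult.commute)
          qed
        qed
        have P_int: "integrable \<mu> \<phi>"
        proof (rule integrable_from_below[OF phim fin_pos])
          show "ext_integral \<mu> \<phi> \<noteq> \<infinity>" using False by simp
          show "integrable \<mu> (\<lambda>y. (1 - rr y) - ln (Z n) - \<beta> * max (L n y) 0)"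
          proof -
            note C = finite_measure.integrable_const[OF fin]
            have c1: "integrable \<mu> (\<lambda>y. 1 - rr y)" by (rule Bochner_Integration.integrable_diff[OF C rr_int])
            have c2: "integrable \<mu> (\<lambda>y. (1 - rr y) - ln (Z n))" by (rule Bochner_Integration.integrable_diff[OF c1 C])
            have c4: "integrable \<mu> (\<lambda>y. \<beta> * max (L n y) 0)" by (rule Bochner_Integration.integrable_mult_right) (rule posL)
            show ?thesis by (rule Bochner_Integration.integrable_diff[OF c2 c4])
          qed
          show "AE y in \<mu>. (1 - rr y) - ln (Z n) - \<beta> * max (L n y) 0 \<le> \<phi> y"
            using pw
          proof (rule eventually_mono)
            fix y assume "1 - rr y \<le> \<phi> y + \<beta> * L n y + ln (Z n)"
            moreover have "\<beta> * L n y \<le> \<beta> * max (L n y) 0" using beta_pos by simp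
            ultimately show "(1 - rr y) - ln (Z n) - \<beta> * max (L n y) 0 \<le> \<phi> y" by linarith
          qed
        qed
        have m1: "measure \<mu> (space \<mu>) = 1" using prob_space.prob_space[OF prob_mu] .
        have "integral\<^sup>L \<mu> (\<lambda>y. 1 - rr y) \<le> integral\<^sup>L \<mu> (\<lambda>y. \<phi> y + \<beta> * L n y + ln (Z n))"
        proof (rule integral_mono_AE)
          note C = finite_measure.integrable_const[OF fin]
          show "integrable \<mu> (\<lambda>y. 1 - rr y)" by (rule Bochner_Integration.integrable_diff[OF C rr_int])
          have i1: "integrable \<mu> (\<lambda>y. \<beta> * L n y)" by (rule Bochner_Integration.integrable_mult_right) (rule L_int)
          have i2: "integrable \<mu> (\<lambda>y. \<phi> y + \<beta> * L n y)" by (rule Bochner_Integration.integrable_add[OF P_int i1])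
          show "integrable \<mu> (\<lambda>y. \<phi> y + \<beta> * L n y + ln (Z n))" by (rule Bochner_Integration.integrable_add[OF i2 C])
          show "AE y in \<mu>. 1 - rr y \<le> \<phi> y + \<beta> * L n y + ln (Z n)" by (rule pw)
        qed
        moreover have "integral\<^sup>L \<mu> (\<lambda>y. 1 - rr y) = 1 - integral\<^sup>L \<mu> rr"
        proof -
          have "integral\<^sup>L \<mu> (\<lambda>y. 1 - rr y) = integral\<^sup>L \<mu> (\<lambda>y. 1) - integral\<^sup>L \<mu> rr"
            by (rule Bochner_Integration.integral_diff[OF finite_measure.integrable_const[OF fin] rr_int])
          moreover have "integral\<^sup>L \<mu> (\<lambda>y. 1::real) = 1" using m1 by simp
          ultimately show ?thesis by simp
        qed
        moreover have "integral\<^sup>L \<mu> (\<lambda>y. \<phi> y + \<beta> * L n y + ln (Z n)) = integral\<^sup>L \<mu> \<phi> + \<beta> * integral\<^sup>L \<mu> (L n) + ln (Z n)"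
        proof -
          have i1: "integrable \<mu> (\<lambda>y. \<beta> * L n y)" by (rule Bochner_Integration.integrable_mult_right) (rule L_int)
          have i2: "integrable \<mu> (\<lambda>y. \<phi> y + \<beta> * L n y)" by (rule Bochner_Integration.integrable_add[OF P_int i1])
          have "integral\<^sup>L \<mu> (\<lambda>y. \<phi> y + \<beta> * L n y + ln (Z n)) = integral\<^sup>L \<mu> (\<lambda>y. \<phi> y + \<beta> * L n y) + integral\<^sup>L \<mu> (\<lambda>y. ln (Z n))"
            by (rule Bochner_Integration.integral_add[OF i2 finite_measure.integrable_const[OF fin]])
          moreover have "integral\<^sup>L \<mu> (\<lambda>y. \<phi> y + \<beta> * L n y) = integral\<^sup>L \<mu> \<phi> + integral\<^sup>L \<mu> (\<lambda>y. \<beta> * L n y)"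
            by (rule Bochner_Integration.integral_add[OF P_int i1])
          moreover have "integral\<^sup>L \<mu> (\<lambda>y. \<beta> * L n y) = \<beta> * integral\<^sup>L \<mu> (L n)"
            by (rule Bochner_Integration.integral_mult_right) (rule L_int)
          moreover have "integral\<^sup>L \<mu> (\<lambda>y. ln (Z n)) = ln (Z n)" using m1 by simp
          ultimately show ?thesis by simp
        qed
        ultimately have key: "0 \<le> integral\<^sup>L \<mu> \<phi> + \<beta> * integral\<^sup>L \<mu> (L n) + ln (Z n)" using rr_le by linarith
        have "(\<Sum>t = 1..n. loss t (x t)) \<le> integral\<^sup>L \<mu> (L n) + integral\<^sup>L \<mu> \<phi> / \<beta>"
        proof -
          have "- ln (Z n) / \<beta> \<le> integral\<^sup>L \<mu> (L n) + integral\<^sup>L \<mu> \<phi> / \<beta>"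
            using key beta_pos by (simp add: field_simps)
          then show ?thesis using online by linarith
        qed
        then show ?thesis using beta_pos
          by (simp add: ent ext_int_integrable[OF L_int] ext_int_integrable[OF P_int])
      qed
    qed
  qed
qed

end
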